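(* For every base $\mathcal{B}$, atomic multisets $L$ and $K$, and atom $p$: $L\Vdash^K_{\mathcal{B}}p$ if and only if $L,K\vdash_{\mathcal{B}}p$.
   Context: Fix a set $\mathbb{A}$ of propositional atoms. ILL formulae: $\phi ::= p\in\mathbb{A} \mid \top \mid 0 \mid 1 \mid \phi\multimap\phi \mid \phi\otimes\phi \mid \phi\,\&\,\phi \mid \phi\oplus\phi \mid\ !\phi$. All multisets are finite; "$\Gamma,\Delta$" denotes multiset union. Atomic rules and bases: an atomic sequent is $P\Rightarrow p$ with $P$ a multiset of atoms, $p$ an atom. An atomic box is a multiset of atomic sequents. An atomic rule is a triple $\langle\mathbf{A},\mathbf{S},p\rangle$ with $\mathbf{A}$ a multiset of atomic boxes, $\mathbf{S}$ an atomic box, $p$ an atom. A base is a set of atomic rules. An atom $p$ is persistent in $\mathcal{B}$ if some $\langle\varnothing,\mathbf{S},p\rangle\in\mathcal{B}$ has $\mathbf{S}\neq\varnothing$. Derivability $\vdash_{\mathcal{B}}$: (Ref) $p\vdash_{\mathcal{B}}p$; (App) if $\langle\mathbf{A},\mathbf{S},p\rangle\in\mathcal{B}$ with $\mathbf{A}=\{\mathbf{T}_1,\dots,\mathbf{T}_m\}$, and there are atomic multisets $C_1,\dots,C_n$ ($n\ge m$) and a multiset $D=\{d_{m+1},\dots,d_n\}$ of atoms persistent in $\mathcal{B}$ such that $C_i,Q\vdash_{\mathcal{B}}q$ for every $i\le m$ and every $Q\Rightarrow q\in\mathbf{T}_i$, $C_j\vdash_{\mathcal{B}}d_j$ for every $m<j\le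 n$, and $D,U\vdash_{\mathcal{B}}v$ for every $U\Rightarrow v\in\mathbf{S}$, then $C_1,\dots,C_n\vdash_{\mathcal{B}}p$. Support $\Vdash^L_{\mathcal{B}}$ (base $\mathcal{B}$, atomic multiset $L$), by induction on formulae: $\Vdash^L_{\mathcal{B}}p$ iff $L\vdash_{\mathcal{B}}p$; $\Vdash^L_{\mathcal{B}}\varphi\multimap\psi$ iff $\varphi\Vdash^L_{\mathcal{B}}\psi$; $\Vdash^L_{\mathcal{B}}\varphi\otimes\psi$ iff for all $\mathcal{C}\supseteq\mathcal{B}$, atomic $K$, atoms $p$: if $\varphi,\psi\Vdash^K_{\mathcal{C}}p$ then $\Vdash^{L,K}_{\mathcal{C}}p$; $\Vdash^L_{\mathcal{B}}1$ iff for all $\mathcal{C}\supseteq\mathcal{B}$, $K$, $p$: if $\Vdash^K_{\mathcal{C}}p$ then $\Vdash^{L,K}_{\mathcal{C}}p$; $\Vdash^L_{\mathcal{B}}\varphi\&\psi$ iff $\Vdash^L_{\mathcal{B}}\varphi$ and $\Vdash^L_{\mathcal{B}}\psi$; $\Vdash^L_{\mathcal{B}}\varphi\oplus\psi$ iff for all $\mathcal{C}\supseteq\mathcal{B}$, $K$, $p$: if $\varphi\Vdash^K_{\mathcal{C}}p$ and $\psi\Vdash^K_{\mathcal{C}}p$ then $\Vdash^{L,K}_{\mathcal{C}}p$; $\Vdash^L_{\mathcal{B}}0$ iff $\Vdash^{L,K}_{\mathcal{B}}p$ for all atoms $p$ and atomic $K$; $\Vdash^L_{\mathcal{B}}\top$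 always; $\Vdash^L_{\mathcal{B}}!\varphi$ iff for all $\mathcal{C}\supseteq\mathcal{B}$, $K$, $p$: if (for all $\mathcal{D}\supseteq\mathcal{C}$, $\Vdash^{\varnothing}_{\mathcal{D}}\varphi$ implies $\Vdash^K_{\mathcal{D}}p$) then $\Vdash^{L,K}_{\mathcal{C}}p$. For nonempty multisets: $\Vdash^L_{\mathcal{B}}\Gamma,\Delta$ iff $L=K,M$ with $\Vdash^K_{\mathcal{B}}\Gamma$ and $\Vdash^M_{\mathcal{B}}\Delta$. For a nonempty antecedent written $!\Delta,\Theta$, where $!\Delta$ collects the formulae with top-level connective $!$ (with $\Delta$ the formulae under those $!$) and $\Theta$ contains none: $!\Delta,\Theta\Vdash^L_{\mathcal{B}}\varphi$ iff for all $\mathcal{C}\supseteq\mathcal{B}$ and atomic $K$, if $\Vdash^{\varnothing}_{\mathcal{C}}\delta$ for every $\delta\in\Delta$ and $\Vdash^K_{\mathcal{C}}\Theta$ then $\Vdash^{L,K}_{\mathcal{C}}\varphi$ (when $\Theta$ is empty, $K$ is empty). An empty antecedent: $\varnothing\Vdash^L_{\mathcal{B}}\varphi$ means $\Vdash^L_{\mathcal{B}}\varphi$. An atomic multiset $L$ used as an antecedent is regarded as a multiset of atomic formulae. *)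

theory Defs
  imports Main "HOL-Library.Multiset"
begin

type_synonym 'a asequent = "'a multiset \<times> 'a"
type_synonym 'a box = "'a asequent multiset"
type_synonym 'a arule = "'a box multiset \<times> 'a box \<times> 'a"
type_synonym 'a base = "'a arule set"

definition persistent :: "'a base \<Rightarrow> 'a \<Rightarrow> bool" where
  "persistent B p \<longleftrightarrow> (\<exists>S. ({#}, S, p) \<in> B \<and> S \<noteq> {#})"

text \<open>Derivability. The boxes of A are enumerated by a list Ts (mset Ts = A);
  C_1..C_n are the list Cs, the persistent atoms d_{m+1}..d_n are the list ds.\<close>

inductive derives :: "'a base \<Rightarrow> 'a multiset \<Rightarrow> 'a \<Rightarrow> bool" where
  Ref: "derives B {#p#} p"
| App: "\<lbrakk> (A, S, p) \<in> B;
          mset Ts = A;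
          length Cs = length Ts + length ds;
          \<forall>i < length Ts. \<forall>Qq \<in># Ts ! i. derives B (Cs ! i + fst Qq) (snd Qq);
          \<forall>j < length ds. persistent B (ds ! j) \<and> derives B (Cs ! (length Ts + j)) (ds ! j);
          \<forall>Uv \<in># S. derives B (mset ds + fst Uv) (snd Uv) \<rbrakk>
        \<Longrightarrow> derives B (sum_list Cs) p"

datatype 'a fm = Atom 'a | Top | Zero | One | Lolli "'a fm" "'a fm" | Tensor "'a fm" "'a fm"
  | With "'a fm" "'a fm" | Plus "'a fm" "'a fm" | Bang "'a fm"

text \<open>An antecedent item: its support predicate, and, if the formula is of the form !\<delta>,
  the predicate (\<lambda>C. support of \<delta> at C with the empty multiset).\<close>

type_synonym 'a item = "('a base \<Rightarrow> 'a multiset \<Rightarrow> bool) \<times> ('a base \<Rightarrow> bool) option"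

fun msupp_items :: "'a base \<Rightarrow> 'a multiset \<Rightarrow> 'a item list \<Rightarrow> bool" where
  "msupp_items C K [] \<longleftrightarrow> K = {#}"
| "msupp_items C K (it # its) \<longleftrightarrow>
     (\<exists>K1 K2. K = K1 + K2 \<and> fst it C K1 \<and> msupp_items C K2 its)"

definition ante_items :: "'a base \<Rightarrow> 'a multiset \<Rightarrow> 'a item list
    \<Rightarrow> ('a base \<Rightarrow> 'a multiset \<Rightarrow> bool) \<Rightarrow> bool" where
  "ante_items B L its Q \<longleftrightarrow>
     (if its = [] then Q B L
      else (\<forall>C K. B \<subseteq> C \<longrightarrow>
              (\<forall>it \<in> set its. case snd it of Some d \<Rightarrow> d C | None \<Rightarrow> True) \<longrightarrow>
              msupp_items C K (filter (\<lambda>it. snd it = None) its) \<longrightarrow>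
              Q C (L + K)))"

primrec sem :: "'a fm \<Rightarrow> 'a item" where
  "sem (Atom p) = ((\<lambda>B L. derives B L p), None)"
| "sem Top = ((\<lambda>B L. True), None)"
| "sem Zero = ((\<lambda>B L. \<forall>p K. derives B (L + K) p), None)"
| "sem One = ((\<lambda>B L. \<forall>C K p. B \<subseteq> C \<longrightarrow> derives C K p \<longrightarrow> derives C (L + K) p), None)"
| "sem (Lolli \<phi> \<psi>) = ((\<lambda>B L. ante_items B L [sem \<phi>] (fst (sem \<psi>))), None)"
| "sem (Tensor \<phi> \<psi>) = ((\<lambda>B L. \<forall>C K p. B \<subseteq> C \<longrightarrow>
        ante_items C K [sem \<phi>, sem \<psi>] (\<lambda>D M. derives D M p) \<longrightarrow> derives C (L + K) p), None)"
| "sem (With \<phi> \<psi>) = ((\<lambda>B L. fst (sem \<phi>) B L \<and> fst (sem \<psi>) B L), None)"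
| "sem (Plus \<phi> \<psi>) = ((\<lambda>B L. \<forall>C K p. B \<subseteq> C \<longrightarrow>
        ante_items C K [sem \<phi>] (\<lambda>D M. derives D M p) \<longrightarrow>
        ante_items C K [sem \<psi>] (\<lambda>D M. derives D M p) \<longrightarrow> derives C (L + K) p), None)"
| "sem (Bang \<phi>) = ((\<lambda>B L. \<forall>C K p. B \<subseteq> C \<longrightarrow>
        (\<forall>D. C \<subseteq> D \<longrightarrow> fst (sem \<phi>) D {#} \<longrightarrow> derives D K p) \<longrightarrow> derives C (L + K) p),
      Some (\<lambda>C. fst (sem \<phi>) C {#}))"

definition supp :: "'a base \<Rightarrow> 'a multiset \<Rightarrow> 'a fm \<Rightarrow> bool" where
  "supp B L \<phi> = fst (sem \<phi>) B L"

inductive msupp :: "'a base \<Rightarrow> 'a multiset \<Rightarrow> 'a fm multiset \<Rightarrow> bool" where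
  "msupp B {#} {#}"
| "supp B K \<phi> \<Longrightarrow> msupp B M \<Gamma> \<Longrightarrow> msupp B (K + M) (add_mset \<phi> \<Gamma>)"

definition is_bang :: "'a fm \<Rightarrow> bool" where
  "is_bang \<phi> \<longleftrightarrow> (\<exists>\<delta>. \<phi> = Bang \<delta>)"

definition seq_supp :: "'a base \<Rightarrow> 'a fm multiset \<Rightarrow> 'a multiset \<Rightarrow> 'a fm \<Rightarrow> bool" where
  "seq_supp B \<Gamma> L \<phi> \<longleftrightarrow>
     (if \<Gamma> = {#} then supp B L \<phi>
      else (\<forall>C K. B \<subseteq> C \<longrightarrow>
              (\<forall>\<delta>. Bang \<delta> \<in># \<Gamma> \<longrightarrow> supp C {#} \<delta>) \<longrightarrow>
              msupp C K (filter_mset (\<lambda>\<phi>. \<not> is_bang \<phi>) \<Gamma>) \<longrightarrow>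
              supp C (L + K) \<phi>))"

end

theory Submission
  imports Defs
begin

lemma persistent_mono: "persistent B d \<Longrightarrow> B \<subseteq> C \<Longrightarrow> persistent C d"
  unfolding persistent_def by blast

lemma derives_mono: "derives B X p \<Longrightarrow> B \<subseteq> C \<Longrightarrow> derives C X p"
proof (induction rule: derives.induct)
  case (Ref B p)
  show ?case by (rule derives.Ref)
next
  case (App A S p B Ts Cs ds)
  show ?case
  proof (rule derives.App[of A S p C Ts Cs ds])
    show "(A, S, p) \<in> C" using App.hyps(1) App.prems by blast
    show "mset Ts = A" by (rule App.hyps(2))
    show "length Cs = length Ts + length ds" by (rule App.hyps(3))
    show "\<forall>i<length Ts. \<forall>Qq\<in>#Ts ! i. derives C (Cs ! i + fst Qq) (snd Qq)"
      using App.IH(1) App.prems by simp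
    show "\<forall>j<length ds. persistent C (ds ! j) \<and> derives C (Cs ! (length Ts + j)) (ds ! j)"
      using App.IH(2) App.prems persistent_mono[of B _ C] by simp
    show "\<forall>Uv\<in>#S. derives C (mset ds + fst Uv) (snd Uv)"
      using App.IH(3) App.prems by simp
  qed
qed

lemma in_sum_list_aux: "i < length Cs \<Longrightarrow> l \<in># Cs ! i \<Longrightarrow> l \<in># sum_list Cs"
proof (induction Cs arbitrary: i)
  case Nil then show ?case by simp
next
  case (Cons c Cs) then show ?case by (cases i) auto
qed

lemma sum_list_upd:
  "i < length Cs \<Longrightarrow> l \<in># Cs ! i \<Longrightarrow>
   sum_list (Cs[i := Cs ! i - {#l#} + M]) = sum_list Cs - {#l#} + M"
proof (induction Cs arbitrary: i)
  case Nil then show ?case by simp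
next
  case (Cons c Cs)
  show ?case
  proof (cases i)
    case 0
    then show ?thesis using Cons by (simp add: multiset_eq_iff)
  next
    case (Suc j)
    then have "l \<in># sum_list Cs" using Cons
      using Cons.prems in_sum_list_aux[of j Cs l] by simp
    have "sum_list ((c # Cs)[i := (c # Cs) ! i - {#l#} + M]) = c + (sum_list Cs - {#l#} + M)"
      using Cons.IH[of j] Cons.prems Suc by simp
    also have "\<dots> = c + sum_list Cs - {#l#} + M"
    proof -
      obtain S' where "sum_list Cs = add_mset l S'" using \<open>l \<in># sum_list Cs\<close> multi_member_split by metis
      then show ?thesis by simp
    qed
    finally show ?thesis by simp
  qed
qed

lemma in_sum_list: "l \<in># sum_list Cs \<Longrightarrow> \<exists>i < length Cs. l \<in># Cs ! i"
proof (induction Cs)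
  case Nil then show ?case by simp
next
  case (Cons c Cs)
  show ?case
  proof (cases "l \<in># c")
    case True then show ?thesis by (intro exI[of _ 0]) simp
  next
    case False
    then have "l \<in># sum_list Cs" using Cons.prems by simp
    then obtain i where "i < length Cs" "l \<in># Cs ! i" using Cons.IH by blast
    then show ?thesis by (intro exI[of _ "Suc i"]) simp
  qed
qed

lemma cut1:
  "derives B X q \<Longrightarrow> l \<in># X \<Longrightarrow> derives B M l \<Longrightarrow> derives B (X - {#l#} + M) q"
proof (induction rule: derives.induct)
  case (Ref B p)
  then show ?case by simp
next
  case (App A S p B Ts Cs ds)
  have ih1: "\<And>k Qq. k < length Ts \<Longrightarrow> Qq \<in># Ts ! k \<Longrightarrow>
        derives B (Cs ! k + fst Qq) (snd Qq) \<and>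
        (l \<in># Cs ! k + fst Qq \<longrightarrow> derives B M l \<longrightarrow> derives B (Cs ! k + fst Qq - {#l#} + M) (snd Qq))"
    using App.IH(1)[rule_format] .
  have ih2: "\<And>j. j < length ds \<Longrightarrow> persistent B (ds ! j) \<and>
     derives B (Cs ! (length Ts + j)) (ds ! j) \<and>
     (l \<in># Cs ! (length Ts + j) \<longrightarrow> derives B M l \<longrightarrow>
      derives B (Cs ! (length Ts + j) - {#l#} + M) (ds ! j))"
    using App.IH(2)[rule_format] .
  have ih3: "\<forall>Uv\<in>#S. derives B (mset ds + fst Uv) (snd Uv)"
    using App.IH(3) by simp
  have dM: "derives B M l" by (rule App.prems(2))
  obtain i where i: "i < length Cs" "l \<in># Cs ! i" using in_sum_list[OF App.prems(1)] by blast
  define Cs' where "Cs' = Cs[i := Cs ! i - {#l#} + M]"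
  have eq: "sum_list Cs' = sum_list Cs - {#l#} + M" unfolding Cs'_def using sum_list_upd[OF i] .
  have len: "length Cs' = length Ts + length ds" using App.hyps(3) by (simp add: Cs'_def)
  have c1: "\<forall>k < length Ts. \<forall>Qq \<in># Ts ! k. derives B (Cs' ! k + fst Qq) (snd Qq)"
  proof (intro allI impI ballI)
    fix k Qq assume k: "k < length Ts" and Q: "Qq \<in># Ts ! k"
    show "derives B (Cs' ! k + fst Qq) (snd Qq)"
    proof (cases "k = i")
      case True
      have lin: "l \<in># Cs ! k + fst Qq" using i(2) True by simp
      have "derives B (Cs ! k + fst Qq - {#l#} + M) (snd Qq)"
        using mp[OF mp[OF conjunct2[OF ih1[OF k Q]] lin] dM] .
      moreover have "Cs ! k + fst Qq - {#l#} + M = Cs' ! k + fst Qq"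
      proof -
        obtain R where R: "Cs ! i = add_mset l R" using multi_member_split[OF i(2)] by blast
        have "Cs' ! k = R + M" using True i(1) R by (simp add: Cs'_def)
        then show ?thesis using True R by (simp add: ac_simps)
      qed
      ultimately show ?thesis by simp
    next
      case False
      then have "Cs' ! k = Cs ! k" by (simp add: Cs'_def)
      then show ?thesis using ih1[OF k Q] by simp
    qed
  qed
  have c2: "\<forall>j < length ds. persistent B (ds ! j) \<and> derives B (Cs' ! (length Ts + j)) (ds ! j)"
  proof (intro allI impI conjI)
    fix j assume j: "j < length ds"
    show "persistent B (ds ! j)" using conjunct1[OF ih2[OF j]] .
    show "derives B (Cs' ! (length Ts + j)) (ds ! j)"
    proof (cases "length Ts + j = i")
      case True
      have lin: "l \<in># Cs ! (length Ts + j)" using i(2) True by simp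
      have "derives B (Cs ! (length Ts + j) - {#l#} + M) (ds ! j)"
        using mp[OF mp[OF conjunct2[OF conjunct2[OF ih2[OF j]]] lin] dM] .
      moreover have "Cs' ! (length Ts + j) = Cs ! (length Ts + j) - {#l#} + M"
        using True i(1) by (simp add: Cs'_def)
      ultimately show ?thesis by simp
    next
      case False
      then have "Cs' ! (length Ts + j) = Cs ! (length Ts + j)" by (simp add: Cs'_def)
      then show ?thesis using ih2[OF j] by simp
    qed
  qed
  have "derives B (sum_list Cs') p"
    by (rule derives.App[OF App.hyps(1) App.hyps(2) len c1 c2 ih3])
  then show ?case using eq by simp
qed

lemma cut_multi:
  "msupp C M \<Gamma> \<Longrightarrow> \<forall>L X. \<Gamma> = image_mset Atom L \<longrightarrow> derives C (L + X) p \<longrightarrow> derives C (M + X) p"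
proof (induction rule: msupp.induct)
  case (1 B)
  then show ?case by simp
next
  case (2 C K0 \<phi> M0 \<Gamma>)
  show ?case
  proof (intro allI impI)
    fix L X assume h: "add_mset \<phi> \<Gamma> = image_mset Atom L" and d: "derives C (L + X) p"
    obtain L1 a where a: "L = add_mset a L1" "Atom a = \<phi>" "image_mset Atom L1 = \<Gamma>"
      using msed_map_invR[OF h[symmetric]] by blast
    have "derives C K0 a" using 2(1) a(2) by (auto simp: supp_def)
    then have "derives C (L + X - {#a#} + K0) p" using cut1[OF d _ \<open>derives C K0 a\<close>] a(1) by simp
    then have "derives C (L1 + (X + K0)) p" using a(1) by (simp add: add.assoc)
    then have "derives C (M0 + (X + K0)) p" using 2(3) a(3) by blast
    then show "derives C (K0 + M0 + X) p" by (simp add: ac_simps)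
  qed
qed

lemma msupp_atoms: "msupp B L (image_mset Atom L)"
proof (induction L)
  case empty then show ?case by (simp add: msupp.intros(1))
next
  case (add x L)
  have "supp B {#x#} (Atom x)" by (simp add: supp_def derives.Ref)
  from msupp.intros(2)[OF this add] show ?case by simp
qed

theorem lemma2:
  fixes B :: "'a base" and L K :: "'a multiset" and p :: 'a
  shows "seq_supp B (image_mset Atom L) K (Atom p) \<longleftrightarrow> derives B (L + K) p"
proof (cases "L = {#}")
  case True
  then show ?thesis by (simp add: seq_supp_def supp_def)
next
  case False
  have f: "filter_mset (\<lambda>\<phi>. \<not> is_bang \<phi>) (image_mset Atom L) = image_mset Atom L"
    by (induction L) (auto simp: is_bang_def)
  have "seq_supp B (image_mset Atom L) K (Atom p) \<longleftrightarrow>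
     (\<forall>C M. B \<subseteq> C \<longrightarrow> msupp C M (image_mset Atom L) \<longrightarrow> derives C (K + M) p)"
  proof -
    have nb: "\<forall>C. \<forall>\<delta>. Bang \<delta> \<in># image_mset Atom L \<longrightarrow> supp C {#} \<delta>"
      by (simp add: image_iff)
    have ne: "image_mset Atom L \<noteq> {#}" using False by simp
    have "seq_supp B (image_mset Atom L) K (Atom p) \<longleftrightarrow>
      (\<forall>C M. B \<subseteq> C \<longrightarrow> (\<forall>\<delta>. Bang \<delta> \<in># image_mset Atom L \<longrightarrow> supp C {#} \<delta>) \<longrightarrow>
          msupp C M (image_mset Atom L) \<longrightarrow> supp C (K + M) (Atom p))"
      unfolding seq_supp_def f using ne by (simp only: if_False)
    also have "\<dots> \<longleftrightarrow> (\<forall>C M. B \<subseteq> C \<longrightarrow> msupp C M (image_mset Atom L) \<longrightarrow> derives C (K + M) p)"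
    proof -
      have sa: "\<And>C X. supp C X (Atom p) = derives C X p" by (simp add: supp_def)
      show ?thesis unfolding sa
      proof (intro iffI allI impI)
        fix C M
        assume h: "\<forall>C M. B \<subseteq> C \<longrightarrow> (\<forall>\<delta>. Bang \<delta> \<in># image_mset Atom L \<longrightarrow> supp C {#} \<delta>) \<longrightarrow>
          msupp C M (image_mset Atom L) \<longrightarrow> derives C (K + M) p"
          and c: "B \<subseteq> C" and ms: "msupp C M (image_mset Atom L)"
        have n1: "\<forall>\<delta>. Bang \<delta> \<in># image_mset Atom L \<longrightarrow> supp C {#} \<delta>" using nb by (rule spec)
        have hh: "B \<subseteq> C \<longrightarrow> (\<forall>\<delta>. Bang \<delta> \<in># image_mset Atom L \<longrightarrow> supp C {#} \<delta>) \<longrightarrow>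
          msupp C M (image_mset Atom L) \<longrightarrow> derives C (K + M) p" using spec[OF spec[OF h, of C], of M] .
        show "derives C (K + M) p" by (rule mp[OF mp[OF mp[OF hh c] n1] ms])
      next
        fix C M
        assume h: "\<forall>C M. B \<subseteq> C \<longrightarrow> msupp C M (image_mset Atom L) \<longrightarrow> derives C (K + M) p"
          and c: "B \<subseteq> C" and "\<forall>\<delta>. Bang \<delta> \<in># image_mset Atom L \<longrightarrow> supp C {#} \<delta>"
          and ms: "msupp C M (image_mset Atom L)"
        show "derives C (K + M) p" by (rule mp[OF mp[OF spec[OF spec[OF h, of C], of M] c] ms])
      qed
    qed
    finally show ?thesis .
  qed
  also have "\<dots> \<longleftrightarrow> derives B (L + K) p"
  proof
    assume h: "\<forall>C M. B \<subseteq> C \<longrightarrow> msupp C M (image_mset Atom L) \<longrightarrow> derives C (K + M) p"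
    have "derives B (K + L) p" using h[rule_format, OF order_refl msupp_atoms] .
    then show "derives B (L + K) p" by (simp add: ac_simps)
  next
    assume d: "derives B (L + K) p"
    show "\<forall>C M. B \<subseteq> C \<longrightarrow> msupp C M (image_mset Atom L) \<longrightarrow> derives C (K + M) p"
    proof (intro allI impI)
      fix C M assume "B \<subseteq> C" and ms: "msupp C M (image_mset Atom L)"
      have dc: "derives C (L + K) p" using derives_mono[OF d \<open>B \<subseteq> C\<close>] .
      have "derives C (M + K) p" using cut_multi[OF ms, rule_format, OF refl dc] .
      then show "derives C (K + M) p" by (simp add: ac_simps)
    qed
  qed
  finally show ?thesis .
qed

end
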